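(* Let $\mathsf N$ be odd and assume the setting below. For every $\lambda\ne0$ with $\mathsf B(\lambda)$ invertible and $\lambda\ne\pm\eta_a^{(h)}$ for all $a,h$, $$\langle t|\mathsf B^{-1}(\lambda)\mathsf A(\lambda)|t'\rangle=\det_{1\le a,b\le\mathsf N}\mathcal U^{(t,t')}_{a,b}(\lambda),$$ where for $b\in\{1,\dots,\mathsf N-1\}$ $$\mathcal U^{(t,t')}_{a,b}(\lambda)=(\eta_a^{(0)})^{2b-1}\sum_{c=1}^{p}q^{(2b-1)c}\frac{Q_{t'}(\eta_a^{(c)})\bar Q_t(\eta_a^{(c)})}{\omega_a(\eta_a^{(c)})},$$ $$\mathcal U^{(t,t')}_{a,\mathsf N}(\lambda)=\frac{(\eta_a^{(0)})^{\mathsf N-1}}{\textsc k}\sum_{h=1}^{p}\frac{q^{(\mathsf N-1)h}\,Q_{t'}(\eta_a^{(h)})\,\bar Q_t(\eta_a^{(h+1)})\,\bar a(\eta_a^{(h)})}{\omega_a(\eta_a^{(h)})\,\big(\lambda/\eta_a^{(h+1)}-\eta_a^{(h+1)}/\lambda\big)}.$$ Consequently, if moreover $\langle t|\mathsf U_n=\varphi_n^{(t)}\langle t|$ and $\mathsf U_n|t'\rangle=\varphi_n^{(t')}|t'\rangle$ with $\varphi_n^{(t')}\ne0$, and $\mathsf u_n=\mathsf U_n\mathsf B^{-1}(\mu_{n,+})\mathsf A(\mu_{n,+})\mathsf U_n^{-1}$, then $\langle t|\mathsf u_n|t'\rangle=\frac{\varphi_n^{(t)}}{\varphi_n^{(t')}}\det_{\mathsf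 N}\mathcal U^{(t,t')}(\mu_{n,+})$.
   Context: Let $p\ge3$ be odd, $q\in\mathbb C$ with $q^p=1$ and $q^2$ a primitive $p$-th root of unity, $\mathsf N$ odd. Let $\eta_1^{(0)},\dots,\eta_{\mathsf N}^{(0)}$ be nonzero, $\eta_a^{(h)}=q^h\eta_a^{(0)}$, with $(\eta_a^{(h)})^2\ne(\eta_b^{(h')})^2$ for $a\ne b$; $\textsc k\ne0$ a constant; $\bar a$ a complex function; $\omega_1,\dots,\omega_{\mathsf N}$ functions nonvanishing at the points $\eta_a^{(h)}$. For $\mathbf h\in(\mathbb Z/p\mathbb Z)^{\mathsf N}$ put $\mathsf b_{\mathbf h}(\lambda)=\textsc k\prod_{a=1}^{\mathsf N}(\lambda/\eta_a^{(h_a)}-\eta_a^{(h_a)}/\lambda)$ and $V_{\mathbf h}=\prod_{1\le b<a\le\mathsf N}((\eta_a^{(h_a)})^2-(\eta_b^{(h_b)})^2)$; $\mathbf e_a$ is the $a$-th unit vector. Operators $\mathsf A(\lambda),\mathsf B(\lambda)$ act on a space $\mathcal R$ with basis $\{|\mathbf h\rangle\}$ (right SOV basis) such that $\mathsf B(\lambda)|\mathbf h\rangle=\mathsf b_{\mathbf h}(\lambda)|\mathbf h\rangle$ and $\mathsf A(\lambda)|\mathbf h\rangle=\sum_{a=1}^{\mathsf N}|\mathbf h+\mathbf e_a\rangle\prod_{b\ne a}\frac{\lambda/\eta_b^{(h_b)}-\eta_b^{(h_b)}/\lambda}{\eta_a^{(h_a)}/\eta_b^{(h_b)}-\eta_b^{(h_b)}/\eta_a^{(h_a)}}\bar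 a(\eta_a^{(h_a)})$; the dual space has covectors $\{\langle\mathbf h|\}$ with $\langle\mathbf h|\mathbf h'\rangle=\delta_{\mathbf h,\mathbf h'}\prod_{b=1}^{\mathsf N}\omega_b(\eta_b^{(h_b)})/V_{\mathbf h}$. Given functions $\bar Q_t$, $Q_{t'}$ define $\langle t|=\sum_{\mathbf h}\prod_{a=1}^{\mathsf N}\bar Q_t(\eta_a^{(h_a)})\,V_{\mathbf h}\,\langle\mathbf h|/\prod_b\omega_b(\eta_b^{(h_b)})$ and $|t'\rangle=\sum_{\mathbf h}\prod_{a=1}^{\mathsf N}Q_{t'}(\eta_a^{(h_a)})\,V_{\mathbf h}\,|\mathbf h\rangle/\prod_b\omega_b(\eta_b^{(h_b)})$ (in the paper $\bar Q_t,Q_{t'}$ solve Baxter equations and these are the left/right transfer-matrix eigenstates). For the consequence: $\mathsf U_n$ is the invertible shift operator of the lattice sine-Gordon chain, $\mathsf u_n$ the local Weyl generator at site $n$, $\mu_{n,+}=i\kappa_nq^{1/2}\xi_n$ with $\mathsf B(\mu_{n,+})$ invertible, and $\textsc k=\prod_{n}\kappa_n/i$. *)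

theory Defs
  imports Complex_Main "Jordan_Normal_Form.Determinant"
begin

text \<open>Basis vectors |h> are indexed by
  h in (Z/pZ)^N, represented as functions h :: nat => nat with h a < p for a in {1..N}
  and h a = 0 outside {1..N}. Vectors of the space R and covector coefficient functions
  are functions from such indices to complex numbers (only the values on the index set matter).\<close>

definition sov_idx :: "nat \<Rightarrow> nat \<Rightarrow> (nat \<Rightarrow> nat) set" where
  "sov_idx p N = {h. (\<forall>a\<in>{1..N}. h a < p) \<and> (\<forall>a. a \<notin> {1..N} \<longrightarrow> h a = 0)}"

definition sov_eta :: "complex \<Rightarrow> (nat \<Rightarrow> complex) \<Rightarrow> nat \<Rightarrow> nat \<Rightarrow> complex" where
  "sov_eta q eta0 a h = q ^ h * eta0 a"

definition sov_shift :: "nat \<Rightarrow> nat \<Rightarrow> (nat \<Rightarrow> nat) \<Rightarrow> (nat \<Rightarrow> nat)" where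
  "sov_shift p a h = h(a := (h a + 1) mod p)"

definition sov_b :: "complex \<Rightarrow> complex \<Rightarrow> (nat \<Rightarrow> complex) \<Rightarrow> nat \<Rightarrow> (nat \<Rightarrow> nat) \<Rightarrow> complex \<Rightarrow> complex" where
  "sov_b k q eta0 N h lam =
     k * (\<Prod>a=1..N. lam / sov_eta q eta0 a (h a) - sov_eta q eta0 a (h a) / lam)"

definition sov_V :: "complex \<Rightarrow> (nat \<Rightarrow> complex) \<Rightarrow> nat \<Rightarrow> (nat \<Rightarrow> nat) \<Rightarrow> complex" where
  "sov_V q eta0 N h =
     (\<Prod>b=1..N. \<Prod>a\<in>{b<..N}. (sov_eta q eta0 a (h a))^2 - (sov_eta q eta0 b (h b))^2)"

text \<open>Coefficient of |h + e_a> in A(lambda)|h>\<close>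
definition sov_Acoef :: "complex \<Rightarrow> (nat \<Rightarrow> complex) \<Rightarrow> (complex \<Rightarrow> complex) \<Rightarrow> nat \<Rightarrow>
    (nat \<Rightarrow> nat) \<Rightarrow> nat \<Rightarrow> complex \<Rightarrow> complex" where
  "sov_Acoef q eta0 abar N h a lam =
     (\<Prod>b\<in>{1..N} - {a}.
        (lam / sov_eta q eta0 b (h b) - sov_eta q eta0 b (h b) / lam) /
        (sov_eta q eta0 a (h a) / sov_eta q eta0 b (h b) - sov_eta q eta0 b (h b) / sov_eta q eta0 a (h a)))
     * abar (sov_eta q eta0 a (h a))"

definition sov_A :: "nat \<Rightarrow> complex \<Rightarrow> (nat \<Rightarrow> complex) \<Rightarrow> (complex \<Rightarrow> complex) \<Rightarrow> nat \<Rightarrow> complex \<Rightarrow>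
    ((nat \<Rightarrow> nat) \<Rightarrow> complex) \<Rightarrow> ((nat \<Rightarrow> nat) \<Rightarrow> complex)" where
  "sov_A p q eta0 abar N lam v =
     (\<lambda>h'. \<Sum>h\<in>sov_idx p N. v h *
        (\<Sum>a=1..N. if sov_shift p a h = h' then sov_Acoef q eta0 abar N h a lam else 0))"

definition sov_B :: "complex \<Rightarrow> complex \<Rightarrow> (nat \<Rightarrow> complex) \<Rightarrow> nat \<Rightarrow> complex \<Rightarrow>
    ((nat \<Rightarrow> nat) \<Rightarrow> complex) \<Rightarrow> ((nat \<Rightarrow> nat) \<Rightarrow> complex)" where
  "sov_B k q eta0 N lam v = (\<lambda>h. sov_b k q eta0 N h lam * v h)"

definition sov_B_invertible :: "nat \<Rightarrow> complex \<Rightarrow> complex \<Rightarrow> (nat \<Rightarrow> complex) \<Rightarrow> nat \<Rightarrow> complex \<Rightarrow> bool" where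
  "sov_B_invertible p k q eta0 N lam \<longleftrightarrow> (\<forall>h\<in>sov_idx p N. sov_b k q eta0 N h lam \<noteq> 0)"

text \<open>The inverse B^{-1}(lambda) (meaningful when B(lambda) is invertible)\<close>
definition sov_Binv :: "complex \<Rightarrow> complex \<Rightarrow> (nat \<Rightarrow> complex) \<Rightarrow> nat \<Rightarrow> complex \<Rightarrow>
    ((nat \<Rightarrow> nat) \<Rightarrow> complex) \<Rightarrow> ((nat \<Rightarrow> nat) \<Rightarrow> complex)" where
  "sov_Binv k q eta0 N lam v = (\<lambda>h. v h / sov_b k q eta0 N h lam)"

text \<open>Pairing of the covector sum_h l(h) <h| with the vector sum_h v(h) |h>, using
  <h|h'> = delta_{h,h'} prod_b omega_b(eta_b^(h_b)) / V_h\<close>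
definition sov_pair :: "nat \<Rightarrow> complex \<Rightarrow> (nat \<Rightarrow> complex) \<Rightarrow> (nat \<Rightarrow> complex \<Rightarrow> complex) \<Rightarrow> nat \<Rightarrow>
    ((nat \<Rightarrow> nat) \<Rightarrow> complex) \<Rightarrow> ((nat \<Rightarrow> nat) \<Rightarrow> complex) \<Rightarrow> complex" where
  "sov_pair p q eta0 omega N l v =
     (\<Sum>h\<in>sov_idx p N. l h * v h *
        (\<Prod>b=1..N. omega b (sov_eta q eta0 b (h b))) / sov_V q eta0 N h)"

text \<open>Coefficients of <t| (resp. |t'>) in the SOV basis, built from Qbar_t (resp. Q_t')\<close>
definition sov_state :: "complex \<Rightarrow> (nat \<Rightarrow> complex) \<Rightarrow> (nat \<Rightarrow> complex \<Rightarrow> complex) \<Rightarrow> nat \<Rightarrow>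
    (complex \<Rightarrow> complex) \<Rightarrow> ((nat \<Rightarrow> nat) \<Rightarrow> complex)" where
  "sov_state q eta0 omega N Q =
     (\<lambda>h. (\<Prod>a=1..N. Q (sov_eta q eta0 a (h a))) * sov_V q eta0 N h /
          (\<Prod>b=1..N. omega b (sov_eta q eta0 b (h b))))"

definition sov_apply :: "nat \<Rightarrow> nat \<Rightarrow> ((nat \<Rightarrow> nat) \<Rightarrow> (nat \<Rightarrow> nat) \<Rightarrow> complex) \<Rightarrow>
    ((nat \<Rightarrow> nat) \<Rightarrow> complex) \<Rightarrow> ((nat \<Rightarrow> nat) \<Rightarrow> complex)" where
  "sov_apply p N M v = (\<lambda>h. \<Sum>h'\<in>sov_idx p N. M h h' * v h')"

definition sov_Umat :: "nat \<Rightarrow> complex \<Rightarrow> (nat \<Rightarrow> complex) \<Rightarrow> complex \<Rightarrow> (complex \<Rightarrow> complex) \<Rightarrow>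
    (nat \<Rightarrow> complex \<Rightarrow> complex) \<Rightarrow> nat \<Rightarrow> (complex \<Rightarrow> complex) \<Rightarrow> (complex \<Rightarrow> complex) \<Rightarrow>
    complex \<Rightarrow> nat \<Rightarrow> nat \<Rightarrow> complex" where
  "sov_Umat p q eta0 k abar omega N Qbar Q lam a b =
     (if b < N then
        (eta0 a) ^ (2*b - 1) *
        (\<Sum>c=1..p. q ^ ((2*b - 1) * c) *
           Q (sov_eta q eta0 a c) * Qbar (sov_eta q eta0 a c) / omega a (sov_eta q eta0 a c))
      else
        (eta0 a) ^ (N - 1) / k *
        (\<Sum>h=1..p. q ^ ((N - 1) * h) * Q (sov_eta q eta0 a h) * Qbar (sov_eta q eta0 a (h + 1)) *
           abar (sov_eta q eta0 a h) /
           (omega a (sov_eta q eta0 a h) *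
            (lam / sov_eta q eta0 a (h + 1) - sov_eta q eta0 a (h + 1) / lam))))"

definition sov_detU :: "nat \<Rightarrow> complex \<Rightarrow> (nat \<Rightarrow> complex) \<Rightarrow> complex \<Rightarrow> (complex \<Rightarrow> complex) \<Rightarrow>
    (nat \<Rightarrow> complex \<Rightarrow> complex) \<Rightarrow> nat \<Rightarrow> (complex \<Rightarrow> complex) \<Rightarrow> (complex \<Rightarrow> complex) \<Rightarrow>
    complex \<Rightarrow> complex" where
  "sov_detU p q eta0 k abar omega N Qbar Q lam =
     det (mat N N (\<lambda>(i, j). sov_Umat p q eta0 k abar omega N Qbar Q lam (i + 1) (j + 1)))"

end

theory Submission
  imports Defs "HOL-Library.FuncSet"
begin


definition vprod :: "nat \<Rightarrow> (nat \<Rightarrow> 'a::comm_ring_1) \<Rightarrow> 'a" where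
  "vprod n z = (\<Prod>j<n. \<Prod>i<j. z j - z i)"

lemma vprod_Suc_front:
  "vprod (Suc n) z = (\<Prod>j<n. z (Suc j) - z 0) * vprod n (\<lambda>i. z (Suc i))"
proof (induction n)
  case 0 then show ?case by (simp add: vprod_def)
next
  case (Suc n)
  have "vprod (Suc (Suc n)) z = vprod (Suc n) z * (\<Prod>i<Suc n. z (Suc n) - z i)"
    by (simp add: vprod_def)
  also have "(\<Prod>i<Suc n. z (Suc n) - z i) = (z (Suc n) - z 0) * (\<Prod>i<n. z (Suc n) - z (Suc i))"
    by (subst prod.lessThan_Suc_shift) simp
  also have "vprod (Suc n) z = (\<Prod>j<n. z (Suc j) - z 0) * vprod n (\<lambda>i. z (Suc i))" by (rule Suc)
  finally show ?case by (simp add: vprod_def ac_simps)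
qed

lemma det_rowscale:
  "det (mat n n (\<lambda>(i,j). c i * f i j)) = (\<Prod>i<n. c i) * det (mat n n (\<lambda>(i,j). (f i j :: 'a::comm_ring_1)))"
proof -
  have A: "mat n n (\<lambda>(i,j). c i * f i j) \<in> carrier_mat n n" by simp
  have B: "mat n n (\<lambda>(i,j). f i j) \<in> carrier_mat n n" by simp
  show ?thesis
    unfolding det_def'[OF A] det_def'[OF B] sum_distrib_left
  proof (rule sum.cong[OF refl])
    fix p assume p: "p \<in> {p. p permutes {0..<n}}"
    have "(\<Prod>i = 0..<n. mat n n (\<lambda>(i,j). c i * f i j) $$ (i, p i)) = (\<Prod>i = 0..<n. c i * f i (p i))"
      using p by (intro prod.cong) (auto simp: permutes_in_image)
    moreover have "(\<Prod>i = 0..<n. mat n n (\<lambda>(i,j). f i j) $$ (i, p i)) = (\<Prod>i = 0..<n. f i (p i))"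
      using p by (intro prod.cong) (auto simp: permutes_in_image)
    ultimately show "signof p * (\<Prod>i = 0..<n. mat n n (\<lambda>(i,j). c i * f i j) $$ (i, p i)) =
         (\<Prod>i<n. c i) * (signof p * (\<Prod>i = 0..<n. mat n n (\<lambda>(i,j). f i j) $$ (i, p i)))"
      by (simp add: prod.distrib atLeast0LessThan)
  qed
qed

lemma vandermonde:
  "det (mat n n (\<lambda>(i,j). z i ^ j)) = vprod n (z :: nat \<Rightarrow> 'a::comm_ring_1)"
proof (induction n arbitrary: z)
  case 0 then show ?case by (simp add: vprod_def)
next
  case (Suc n)
  define A where "A = mat (Suc n) (Suc n) (\<lambda>(i,j). z i ^ j)"
  define C where "C = mat (Suc n) (Suc n) (\<lambda>(i,j). if i = j then 1 else if j = Suc i then - z 0 else (0::'a))"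
  define B where "B = mat (Suc n) (Suc n) (\<lambda>(i,j). if j = 0 then 1 else (z i - z 0) * z i ^ (j - 1))"
  have Ac: "A \<in> carrier_mat (Suc n) (Suc n)" and Cc: "C \<in> carrier_mat (Suc n) (Suc n)"
    by (auto simp: A_def C_def)
  have ut: "upper_triangular C" unfolding upper_triangular_def C_def by auto
  have dC: "det C = 1"
  proof -
    have "diag_mat C = map (\<lambda>i. 1) [0..<Suc n]"
      unfolding diag_mat_def by (rule map_cong) (auto simp: C_def)
    then show ?thesis unfolding det_upper_triangular[OF ut Cc] by (simp add: map_replicate_const)
  qed
  have AC: "A * C = B"
  proof (rule eq_matI)
    fix i j assume i: "i < dim_row B" and j: "j < dim_col B"
    then have i: "i < Suc n" and j: "j < Suc n" by (auto simp: B_def)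
    have "(A * C) $$ (i, j) = (\<Sum>k<Suc n. z i ^ k * C $$ (k, j))"
      using i j by (simp add: A_def C_def scalar_prod_def atLeast0LessThan times_mat_def row_def col_def)
    also have "\<dots> = B $$ (i, j)"
    proof (cases j)
      case 0
      have "(\<Sum>k<Suc n. z i ^ k * C $$ (k, j)) = (\<Sum>k<Suc n. if k = 0 then 1 else 0)"
        using 0 by (intro sum.cong) (auto simp: C_def)
      then show ?thesis using 0 i by (simp add: B_def)
    next
      case (Suc j')
      have "(\<Sum>k<Suc n. z i ^ k * C $$ (k, j)) = (\<Sum>k<Suc n. (if k = j then z i ^ j else 0) + (if k = j' then - z 0 * z i ^ j' else 0))"
        using Suc j by (intro sum.cong) (auto simp: C_def)
      also have "\<dots> = z i ^ j - z 0 * z i ^ j'" using Suc j by (simp add: sum.distrib)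
      finally show ?thesis using Suc i j by (simp add: B_def algebra_simps)
    qed
    finally show "(A * C) $$ (i, j) = B $$ (i, j)" .
  qed (auto simp: A_def B_def C_def)
  have "det B = det A" using det_mult[OF Ac Cc] dC AC by simp
  have Bc: "B \<in> carrier_mat (Suc n) (Suc n)" by (simp add: B_def)
  have "det B = (\<Sum>j<Suc n. B $$ (0,j) * cofactor B 0 j)"
    by (rule laplace_expansion_row[OF Bc]) simp
  also have "\<dots> = (\<Sum>j<Suc n. if j = 0 then cofactor B 0 0 else 0)"
    by (intro sum.cong) (auto simp: B_def)
  also have "\<dots> = det (mat_delete B 0 0)" by (simp add: cofactor_def)
  also have "mat_delete B 0 0 = mat n n (\<lambda>(i,j). (z (Suc i) - z 0) * z (Suc i) ^ j)"
    by (rule eq_matI) (auto simp: mat_delete_def B_def)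
  also have "det \<dots> = (\<Prod>i<n. z (Suc i) - z 0) * vprod n (\<lambda>i. z (Suc i))"
    using det_rowscale[of n "\<lambda>i. z (Suc i) - z 0" "\<lambda>i j. z (Suc i) ^ j"] Suc[of "\<lambda>i. z (Suc i)"]
    by simp
  finally show ?case using \<open>det B = det A\<close> vprod_Suc_front A_def by metis
qed

lemma vdel:
  assumes i: "i < Suc n"
  shows "vprod (Suc n) z = (-1)^i * (\<Prod>j<n. z (insert_index i j) - z i) * vprod n (\<lambda>j. z (insert_index i j))"
proof -
  define V where "V = mat (Suc n) (Suc n) (\<lambda>(r,j). z r ^ j)"
  define \<sigma> where "\<sigma> = (\<lambda>r. if r = 0 then i else insert_index i (r - 1))"
  have Vc: "V \<in> carrier_mat (Suc n) (Suc n)" by (simp add: V_def)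
  have "swap_row_to_front V i = mat (Suc n) (Suc n) (\<lambda>(r,j). z (\<sigma> r) ^ j)"
    unfolding swap_row_to_front_result[OF Vc i]
    by (rule eq_matI) (use i in \<open>auto simp: V_def \<sigma>_def insert_index_def\<close>)
  then have "vprod (Suc n) (\<lambda>r. z (\<sigma> r)) = (-1)^i * vprod (Suc n) z"
    using swap_row_to_front_det[OF Vc i] vandermonde[of "Suc n" z] vandermonde[of "Suc n" "\<lambda>r. z (\<sigma> r)"]
    by (simp add: V_def)
  moreover have "vprod (Suc n) (\<lambda>r. z (\<sigma> r)) = (\<Prod>j<n. z (insert_index i j) - z i) * vprod n (\<lambda>j. z (insert_index i j))"
    unfolding vprod_Suc_front by (simp add: \<sigma>_def)
  ultimately have "(-1)^i * ((\<Prod>j<n. z (insert_index i j) - z i) * vprod n (\<lambda>j. z (insert_index i j))) = (-1)^i * ((-1)^i * vprod (Suc n) z)"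
    by simp
  also have "\<dots> = vprod (Suc n) z" by (simp flip: power_add mult.assoc add: power_add[symmetric])
  finally show ?thesis by (simp add: ac_simps)
qed

lemma prod_insert_index:
  assumes "i < Suc n"
  shows "(\<Prod>j<n. g (insert_index i j)) = (\<Prod>c\<in>{0..<Suc n}-{i}. g c)"
proof -
  have "(\<Prod>c\<in>{0..<Suc n}-{i}. g c) = (\<Prod>c\<in>insert_index i ` {0..<n}. g c)"
    using insert_index_image[OF assms] by simp
  also have "\<dots> = (\<Prod>j\<in>{0..<n}. g (insert_index i j))"
    by (rule prod.reindex[OF insert_index_inj_on, unfolded comp_def])
  finally show ?thesis by (simp add: atLeast0LessThan)
qed

lemma detM:
  fixes x F G :: "nat \<Rightarrow> complex"
  assumes xnz: "\<And>c. c < Suc n \<Longrightarrow> x c \<noteq> 0"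
    and xsep: "\<And>i c. i < Suc n \<Longrightarrow> c < Suc n \<Longrightarrow> i \<noteq> c \<Longrightarrow> x i ^ 2 \<noteq> x c ^ 2"
  shows "det (mat (Suc n) (Suc n) (\<lambda>(i,j). if j < n then x i ^ (2*j+1) * F i else x i ^ n * G i)) =
    (\<Sum>i<Suc n. G i * (\<Prod>c\<in>{0..<Suc n}-{i}. F c / (x i / x c - x c / x i)) * vprod (Suc n) (\<lambda>c. x c ^ 2))"
proof -
  define M where "M = mat (Suc n) (Suc n) (\<lambda>(i,j). if j < n then x i ^ (2*j+1) * F i else x i ^ n * G i)"
  have Mc: "M \<in> carrier_mat (Suc n) (Suc n)" by (simp add: M_def)
  have "det M = (\<Sum>i<Suc n. M $$ (i,n) * cofactor M i n)"
    by (rule laplace_expansion_column[OF Mc]) simp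
  also have "\<dots> = (\<Sum>i<Suc n. G i * (\<Prod>c\<in>{0..<Suc n}-{i}. F c / (x i / x c - x c / x i)) * vprod (Suc n) (\<lambda>c. x c ^ 2))"
  proof (rule sum.cong[OF refl])
    fix i assume "i \<in> {..<Suc n}"
    then have i: "i < Suc n" by simp
    let ?z = "\<lambda>c. x c ^ 2"
    let ?k = "insert_index i"
    have kl: "\<And>a. a < n \<Longrightarrow> ?k a < Suc n" by (simp add: insert_index_def)
    have kne: "\<And>a. ?k a \<noteq> i" by simp
    have "mat_delete M i n = mat n n (\<lambda>(a,b). (x (?k a) * F (?k a)) * (?z (?k a)) ^ b)"
      by (rule eq_matI) (auto simp: mat_delete_def M_def insert_index_def power_mult[symmetric] power_add mult.commute)
    then have dd: "det (mat_delete M i n) = (\<Prod>a<n. x (?k a) * F (?k a)) * vprod n (\<lambda>a. ?z (?k a))"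
      using det_rowscale[of n "\<lambda>a. x (?k a) * F (?k a)" "\<lambda>a b. (?z (?k a)) ^ b"] vandermonde[of n "\<lambda>a. ?z (?k a)"]
      by simp
    define P where "P = (\<Prod>a<n. ?z (?k a) - ?z i)"
    have Pnz: "P \<noteq> 0" unfolding P_def
      using xsep[OF kl i kne] by (auto simp: prod_zero_iff)
    have vd: "vprod (Suc n) ?z = (-1)^i * P * vprod n (\<lambda>a. ?z (?k a))"
      unfolding P_def by (rule vdel[OF i])
    have "(\<Prod>c\<in>{0..<Suc n}-{i}. F c / (x i / x c - x c / x i)) = (\<Prod>a<n. F (?k a) / (x i / x (?k a) - x (?k a) / x i))"
      by (rule prod_insert_index[OF i, symmetric])
    also have "\<dots> = (\<Prod>a<n. ((-1) * x i) * (x (?k a) * F (?k a)) / (?z (?k a) - ?z i))"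
    proof (rule prod.cong[OF refl])
      fix a assume "a \<in> {..<n}"
      then have a: "a < n" by simp
      have "x (?k a) \<noteq> 0" "x i \<noteq> 0" using xnz kl[OF a] i by auto
      moreover have "?z (?k a) - ?z i \<noteq> 0" using xsep[OF kl[OF a] i kne] by simp
      ultimately show "F (?k a) / (x i / x (?k a) - x (?k a) / x i) = ((-1) * x i) * (x (?k a) * F (?k a)) / (?z (?k a) - ?z i)"
        by (simp add: field_simps power2_eq_square)
    qed
    also have "\<dots> = (-1)^n * x i ^ n * (\<Prod>a<n. x (?k a) * F (?k a)) / P"
      unfolding P_def prod_dividef prod.distrib by (simp add: power_mult_distrib)
    finally have pe: "(\<Prod>c\<in>{0..<Suc n}-{i}. F c / (x i / x c - x c / x i)) = (-1)^n * x i ^ n * (\<Prod>a<n. x (?k a) * F (?k a)) / P" .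
    have "M $$ (i,n) * cofactor M i n = x i ^ n * G i * ((-1)^(i+n) * ((\<Prod>a<n. x (?k a) * F (?k a)) * vprod n (\<lambda>a. ?z (?k a))))"
    proof -
      have "M $$ (i,n) = x i ^ n * G i" using i by (simp add: M_def)
      then show ?thesis by (simp add: cofactor_def dd)
    qed
    also have "\<dots> = G i * ((-1)^n * x i ^ n * (\<Prod>a<n. x (?k a) * F (?k a)) / P) * ((-1)^i * P * vprod n (\<lambda>a. ?z (?k a)))"
      using Pnz by (simp add: field_simps power_add)
    finally show "M $$ (i,n) * cofactor M i n = G i * (\<Prod>c\<in>{0..<Suc n}-{i}. F c / (x i / x c - x c / x i)) * vprod (Suc n) ?z"
      unfolding pe vd .
  qed
  finally show ?thesis unfolding M_def .
qed

lemma sum_idx_prod: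
  "(\<Sum>h\<in>sov_idx p N. \<Prod>i<N. f i (h (Suc i))) = (\<Prod>i<N. \<Sum>t<p. (f i t :: 'a::comm_semiring_1))"
proof -
  have "(\<Prod>i<N. \<Sum>t<p. f i t) = (\<Sum>g\<in>PiE {..<N} (\<lambda>_. {..<p}). \<Prod>i<N. f i (g i))"
    by (rule prod_sum_PiE) auto
  also have "\<dots> = (\<Sum>h\<in>sov_idx p N. \<Prod>i<N. f i (h (Suc i)))"
    by (rule sum.reindex_bij_witness[where i = "\<lambda>h i. if i < N then h (Suc i) else undefined"
        and j = "\<lambda>g a. if a \<in> {1..N} then g (a - 1) else 0"])
       (auto simp: sov_idx_def PiE_def extensional_def fun_eq_iff Pi_def intro!: prod.cong)
  finally show ?thesis by simp
qed

lemma sum_det: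
  "(\<Sum>h\<in>sov_idx p N. det (mat N N (\<lambda>(i,j). m i (h (Suc i)) j))) =
   det (mat N N (\<lambda>(i,j). \<Sum>t<p. (m i t j :: 'a::comm_ring_1)))"
proof -
  have A: "\<And>h. mat N N (\<lambda>(i,j). m i (h (Suc i)) j) \<in> carrier_mat N N" by simp
  have B: "mat N N (\<lambda>(i,j). \<Sum>t<p. m i t j) \<in> carrier_mat N N" by simp
  have "(\<Sum>h\<in>sov_idx p N. det (mat N N (\<lambda>(i,j). m i (h (Suc i)) j))) =
    (\<Sum>h\<in>sov_idx p N. \<Sum>\<pi>\<in>{\<pi>. \<pi> permutes {0..<N}}. signof \<pi> * (\<Prod>i<N. m i (h (Suc i)) (\<pi> i)))"
  proof (rule sum.cong[OF refl])
    fix h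
    show "det (mat N N (\<lambda>(i,j). m i (h (Suc i)) j)) = (\<Sum>\<pi>\<in>{\<pi>. \<pi> permutes {0..<N}}. signof \<pi> * (\<Prod>i<N. m i (h (Suc i)) (\<pi> i)))"
      unfolding det_def'[OF A]
      by (intro sum.cong refl arg_cong2[where f="(*)"] prod.cong) (auto simp: permutes_in_image atLeast0LessThan)
  qed
  also have "\<dots> = (\<Sum>\<pi>\<in>{\<pi>. \<pi> permutes {0..<N}}. signof \<pi> * (\<Sum>h\<in>sov_idx p N. \<Prod>i<N. m i (h (Suc i)) (\<pi> i)))"
    by (subst sum.swap) (simp add: sum_distrib_left)
  also have "\<dots> = (\<Sum>\<pi>\<in>{\<pi>. \<pi> permutes {0..<N}}. signof \<pi> * (\<Prod>i<N. \<Sum>t<p. m i t (\<pi> i)))"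
    by (intro sum.cong refl arg_cong2[where f="(*)"] sum_idx_prod)
  also have "\<dots> = det (mat N N (\<lambda>(i,j). \<Sum>t<p. m i t j))"
    unfolding det_def'[OF B]
    by (intro sum.cong refl arg_cong2[where f="(*)"] prod.cong) (auto simp: permutes_in_image atLeast0LessThan)
  finally show ?thesis .
qed

lemma V_vprod:
  "sov_V q eta0 N h = vprod N (\<lambda>c. (sov_eta q eta0 (Suc c) (h (Suc c)))^2)"
proof (cases N)
  case 0 then show ?thesis by (simp add: sov_V_def vprod_def)
next
  case (Suc n)
  define z where "z = (\<lambda>c. (sov_eta q eta0 (Suc c) (h (Suc c)))^2)"
  have "sov_V q eta0 N h = (\<Prod>b<Suc n. \<Prod>a\<in>{Suc b<..Suc n}. (sov_eta q eta0 a (h a))^2 - (sov_eta q eta0 (Suc b) (h (Suc b)))^2)"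
    unfolding sov_V_def Suc by (simp add: prod.atLeast1_atMost_eq)
  also have "\<dots> = (\<Prod>b<Suc n. \<Prod>a\<in>{Suc b..n}. z a - z b)"
  proof (rule prod.cong[OF refl])
    fix b
    have "{Suc b<..Suc n} = {Suc (Suc b)..Suc n}" by auto
    also have "\<dots> = Suc ` {Suc b..n}" by (simp add: image_Suc_atLeastAtMost)
    finally have "{Suc b<..Suc n} = Suc ` {Suc b..n}" .
    then show "(\<Prod>a\<in>{Suc b<..Suc n}. (sov_eta q eta0 a (h a))^2 - (sov_eta q eta0 (Suc b) (h (Suc b)))^2) = (\<Prod>a\<in>{Suc b..n}. z a - z b)"
      unfolding z_def by (simp only:) (rule prod.reindex[unfolded comp_def], simp)
  qed
  also have "\<dots> = (\<Prod>b<n. \<Prod>a\<in>{Suc b..n}. z a - z b)" by simp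
  also have "\<dots> = (\<Prod>a\<in>{..n}. \<Prod>b<a. z a - z b)" by (rule prod.nested_swap'[symmetric])
  also have "\<dots> = vprod N z" unfolding vprod_def Suc lessThan_Suc_atMost ..
  finally show ?thesis unfolding z_def .
qed

lemma prod_1N: "(\<Prod>c\<in>{1..N}. g c) = (\<Prod>c<N. g (Suc c))"
  by (simp add: prod.atLeast1_atMost_eq)
lemma sum_1N: "(\<Sum>c\<in>{1..N}. g c) = (\<Sum>c<N. g (Suc c))"
  by (simp add: sum.atLeast1_atMost_eq)
lemma prod_1N_minus:
  "(\<Prod>c\<in>{1..N}-{Suc i}. g c) = (\<Prod>c\<in>{0..<N}-{i}. g (Suc c))"
proof -
  have "{1..N}-{Suc i} = Suc ` ({0..<N}-{i})"
    by (simp add: image_set_diff atLeast0LessThan image_Suc_lessThan)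
  then show ?thesis by (simp add: prod.reindex)
qed

lemma sum_shift_p:
  fixes p :: nat and g :: "nat \<Rightarrow> complex"
  assumes "g p = g 0"
  shows "(\<Sum>t<p. g t) = (\<Sum>c=1..p. g c)"
proof -
  have "(\<Sum>t<Suc p. g t) = (\<Sum>t<p. g t) + g p" by simp
  moreover have "(\<Sum>t<Suc p. g t) = g 0 + (\<Sum>t<p. g (Suc t))" by (rule sum.lessThan_Suc_shift)
  moreover have "(\<Sum>c=1..p. g c) = (\<Sum>t<p. g (Suc t))" by (simp add: sum.atLeast1_atMost_eq)
  ultimately have "g 0 + (\<Sum>t<p. g t) = g 0 + (\<Sum>t<p. g (Suc t))" using assms by (simp add: add.commute)
  then have "(\<Sum>t<p. g t) = (\<Sum>t<p. g (Suc t))" by simp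
  then show ?thesis using \<open>(\<Sum>c=1..p. g c) = (\<Sum>t<p. g (Suc t))\<close> by simp
qed

lemma alg:
  fixes Qi PQ V wi Pw PL PD ab Qbq PQb k Lq :: complex
  assumes "k \<noteq> 0" "Lq \<noteq> 0" "PL \<noteq> 0" "wi \<noteq> 0" "Pw \<noteq> 0" "PD \<noteq> 0"
  shows "(Qi * PQ) * V / (wi * Pw) * (PL / PD * ab) * (Qbq * PQb) / (k * (Lq * PL)) =
    (Qi * Qbq * ab / (wi * k * Lq)) * (PQ * PQb / (Pw * PD)) * V"
proof -
  have "(Qi * PQ) * V / (wi * Pw) * (PL / PD * ab) * (Qbq * PQb) / (k * (Lq * PL)) =
     (Qi * PQ * V * PL * ab * Qbq * PQb) / (wi * Pw * PD * k * Lq * PL)"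
    by (simp add: ac_simps)
  also have "\<dots> = (Qi * PQ * V * ab * Qbq * PQb) / (wi * Pw * PD * k * Lq)"
    using assms by (simp add: ac_simps)
  also have "\<dots> = (Qi * Qbq * ab / (wi * k * Lq)) * (PQ * PQb / (Pw * PD)) * V"
    by (simp add: ac_simps)
  finally show ?thesis .
qed

lemma finite_idx: "finite (sov_idx p N)"
proof -
  have "sov_idx p N \<subseteq> (\<lambda>g a. if a \<in> {1..N} then g a else 0) ` PiE {1..N} (\<lambda>_. {..<p})"
  proof
    fix h assume h: "h \<in> sov_idx p N"
    show "h \<in> (\<lambda>g a. if a \<in> {1..N} then g a else 0) ` PiE {1..N} (\<lambda>_. {..<p})"
      by (rule image_eqI[where x="restrict h {1..N}"]) (use h in \<open>auto simp: sov_idx_def fun_eq_iff\<close>)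
  qed
  moreover have "finite ((\<lambda>g a. if a \<in> {1..N} then g a else 0) ` PiE {1..N} (\<lambda>_. {..<p}))"
    by (intro finite_imageI finite_PiE) auto
  ultimately show ?thesis by (rule finite_subset)
qed

lemma part1:
  fixes p N :: nat and q k lam :: complex and eta0 :: "nat \<Rightarrow> complex"
    and abar :: "complex \<Rightarrow> complex" and omega :: "nat \<Rightarrow> complex \<Rightarrow> complex"
    and Qbar Q :: "complex \<Rightarrow> complex"
  assumes p_pos: "p > 0" and q_p: "q ^ p = 1" and N_pos: "N > 0"
    and eta0_nz: "\<forall>a\<in>{1..N}. eta0 a \<noteq> 0"
    and eta_sep: "\<forall>a\<in>{1..N}. \<forall>b\<in>{1..N}. \<forall>h h'. a \<noteq> b \<longrightarrow>
                    (sov_eta q eta0 a h)^2 \<noteq> (sov_eta q eta0 b h')^2"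
    and k_nz: "k \<noteq> 0"
    and omega_nz: "\<forall>a\<in>{1..N}. \<forall>h. omega a (sov_eta q eta0 a h) \<noteq> 0"
    and Binv: "sov_B_invertible p k q eta0 N lam"
  shows "sov_pair p q eta0 omega N (sov_state q eta0 omega N Qbar)
         (sov_Binv k q eta0 N lam (sov_A p q eta0 abar N lam (sov_state q eta0 omega N Q)))
       = sov_detU p q eta0 k abar omega N Qbar Q lam"
proof -
  have qnz: "q \<noteq> 0" using q_p p_pos by (auto simp: power_0_left)
  have qmod: "\<And>m. q ^ (m mod p) = q ^ m"
  proof -
    fix m
    have "q ^ m = q ^ (m mod p + p * (m div p))" by (simp only: mod_mult_div_eq)
    also have "\<dots> = q ^ (m mod p)" by (simp only: power_add power_mult q_p power_one mult_1_right)
    finally show "q ^ (m mod p) = q ^ m" by simp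
  qed
  have eta_nz: "\<And>a t. a \<in> {1..N} \<Longrightarrow> sov_eta q eta0 a t \<noteq> 0"
    using eta0_nz qnz by (simp add: sov_eta_def)
  have shift_idx: "\<And>h a. h \<in> sov_idx p N \<Longrightarrow> a \<in> {1..N} \<Longrightarrow> sov_shift p a h \<in> sov_idx p N"
    using p_pos by (auto simp: sov_idx_def sov_shift_def)
  have shift_eta: "\<And>h a c. sov_eta q eta0 c (sov_shift p a h c) =
      (if c = a then q * sov_eta q eta0 a (h a) else sov_eta q eta0 c (h c))"
    by (simp add: sov_shift_def sov_eta_def qmod)
  have V_nz: "\<And>h. sov_V q eta0 N h \<noteq> 0"
    using eta_sep by (auto simp: sov_V_def)
  have om_nz: "\<And>h. (\<Prod>b=1..N. omega b (sov_eta q eta0 b (h b))) \<noteq> 0"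
    using omega_nz by auto
  have step1: "\<And>w. sov_pair p q eta0 omega N (sov_state q eta0 omega N Qbar) w =
     (\<Sum>h\<in>sov_idx p N. (\<Prod>a=1..N. Qbar (sov_eta q eta0 a (h a))) * w h)"
    unfolding sov_pair_def sov_state_def
    by (intro sum.cong refl) (use V_nz om_nz in simp)
  define Pqb where "Pqb = (\<lambda>h. \<Prod>a=1..N. Qbar (sov_eta q eta0 a (h a)))"
  define v where "v = sov_state q eta0 omega N Q"
  define Ac where "Ac = (\<lambda>h a. sov_Acoef q eta0 abar N h a lam)"
  define b where "b = (\<lambda>h. sov_b k q eta0 N h lam)"
  define S where "S = sov_idx p N"
  have step2: "(\<Sum>h'\<in>S. Pqb h' * sov_Binv k q eta0 N lam (sov_A p q eta0 abar N lam v) h') =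
     (\<Sum>h\<in>S. \<Sum>a=1..N. v h * Ac h a * Pqb (sov_shift p a h) / b (sov_shift p a h))"
  proof -
    have "(\<Sum>h'\<in>S. Pqb h' * sov_Binv k q eta0 N lam (sov_A p q eta0 abar N lam v) h') =
      (\<Sum>h'\<in>S. \<Sum>h\<in>S. \<Sum>a=1..N. if sov_shift p a h = h' then v h * Ac h a * Pqb h' / b h' else 0)"
      unfolding sov_Binv_def sov_A_def S_def Ac_def b_def
      by (auto simp: sum_distrib_left sum_divide_distrib intro!: sum.cong)
    also have "\<dots> = (\<Sum>h\<in>S. \<Sum>a=1..N. \<Sum>h'\<in>S. if sov_shift p a h = h' then v h * Ac h a * Pqb h' / b h' else 0)"
      by (subst sum.swap) (intro sum.cong refl, rule sum.swap)
    also have "\<dots> = (\<Sum>h\<in>S. \<Sum>a=1..N. v h * Ac h a * Pqb (sov_shift p a h) / b (sov_shift p a h))"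
    proof (intro sum.cong refl)
      fix h a assume "h \<in> S" "a \<in> {1..N}"
      then have "sov_shift p a h \<in> S" using shift_idx by (simp add: S_def)
      then show "(\<Sum>h'\<in>S. if sov_shift p a h = h' then v h * Ac h a * Pqb h' / b h' else 0) =
         v h * Ac h a * Pqb (sov_shift p a h) / b (sov_shift p a h)"
        by (subst sum.delta') (simp_all add: S_def finite_idx)
    qed
    finally show ?thesis .
  qed
  define L where "L = (\<lambda>y::complex. lam / y - y / lam)"
  define X where "X = (\<lambda>(h::nat\<Rightarrow>nat) c. sov_eta q eta0 (Suc c) (h (Suc c)))"
  define F' where "F' = (\<lambda>i t. Q (sov_eta q eta0 (Suc i) t) * Qbar (sov_eta q eta0 (Suc i) t) / omega (Suc i) (sov_eta q eta0 (Suc i) t))"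
  define G' where "G' = (\<lambda>i t. Q (sov_eta q eta0 (Suc i) t) * Qbar (q * sov_eta q eta0 (Suc i) t) * abar (sov_eta q eta0 (Suc i) t) /
      (omega (Suc i) (sov_eta q eta0 (Suc i) t) * k * L (q * sov_eta q eta0 (Suc i) t)))"
  have Xf: "\<And>h c. sov_eta q eta0 (Suc c) (h (Suc c)) = X h c" by (simp add: X_def)
  have Xnz: "\<And>h c. c < N \<Longrightarrow> X h c \<noteq> 0" using eta_nz by (simp add: X_def)
  have Xsep: "\<And>h i c. i < N \<Longrightarrow> c < N \<Longrightarrow> i \<noteq> c \<Longrightarrow> (X h i)^2 \<noteq> (X h c)^2"
    using eta_sep by (simp add: X_def)
  have split: "\<And>(g::nat \<Rightarrow> complex) i. i < N \<Longrightarrow> (\<Prod>c<N. g c) = g i * (\<Prod>c\<in>{0..<N}-{i}. g c)"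
    by (simp add: lessThan_atLeast0 prod.remove)
  have step3: "\<And>h i. h \<in> S \<Longrightarrow> i < N \<Longrightarrow> v h * Ac h (Suc i) * Pqb (sov_shift p (Suc i) h) / b (sov_shift p (Suc i) h) =
     G' i (h (Suc i)) * (\<Prod>c\<in>{0..<N}-{i}. F' c (h (Suc c)) / (X h i / X h c - X h c / X h i)) * vprod N (\<lambda>c. (X h c)^2)"
  proof -
    fix h i assume h: "h \<in> S" and i: "i < N"
    let ?R = "{0..<N}-{i}"
    have sh: "sov_shift p (Suc i) h \<in> S" using shift_idx h i by (simp add: S_def)
    have bsh: "b (sov_shift p (Suc i) h) \<noteq> 0" using Binv sh by (simp add: sov_B_invertible_def S_def b_def)
    have shX: "\<And>c. c < N \<Longrightarrow> sov_eta q eta0 (Suc c) (sov_shift p (Suc i) h (Suc c)) = (if c = i then q * X h i else X h c)"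
      using shift_eta by (simp add: X_def)
    have b_eq: "b (sov_shift p (Suc i) h) = k * (L (q * X h i) * (\<Prod>c\<in>?R. L (X h c)))"
    proof -
      have "b (sov_shift p (Suc i) h) = k * (\<Prod>c<N. L (sov_eta q eta0 (Suc c) (sov_shift p (Suc i) h (Suc c))))"
        unfolding b_def sov_b_def prod_1N by (simp add: L_def)
      also have "(\<Prod>c<N. L (sov_eta q eta0 (Suc c) (sov_shift p (Suc i) h (Suc c)))) = (\<Prod>c<N. L (if c = i then q * X h i else X h c))"
        by (intro prod.cong refl) (simp add: shX)
      also have "\<dots> = L (q * X h i) * (\<Prod>c\<in>?R. L (X h c))"
        by (subst split[OF i]) (auto intro!: prod.cong)
      finally show ?thesis .
    qed
    have Pqb_eq: "Pqb (sov_shift p (Suc i) h) = Qbar (q * X h i) * (\<Prod>c\<in>?R. Qbar (X h c))"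
    proof -
      have "Pqb (sov_shift p (Suc i) h) = (\<Prod>c<N. Qbar (sov_eta q eta0 (Suc c) (sov_shift p (Suc i) h (Suc c))))"
        unfolding Pqb_def prod_1N by simp
      also have "\<dots> = (\<Prod>c<N. Qbar (if c = i then q * X h i else X h c))"
        by (intro prod.cong refl) (simp add: shX)
      also have "\<dots> = Qbar (q * X h i) * (\<Prod>c\<in>?R. Qbar (X h c))"
        by (subst split[OF i]) (auto intro!: prod.cong)
      finally show ?thesis .
    qed
    have v_eq: "v h = (Q (X h i) * (\<Prod>c\<in>?R. Q (X h c))) * vprod N (\<lambda>c. (X h c)^2) /
        (omega (Suc i) (X h i) * (\<Prod>c\<in>?R. omega (Suc c) (X h c)))"
      unfolding v_def sov_state_def prod_1N V_vprod Xf
      by (simp add: split[OF i])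
    have Ac_eq: "Ac h (Suc i) = (\<Prod>c\<in>?R. L (X h c)) / (\<Prod>c\<in>?R. X h i / X h c - X h c / X h i) * abar (X h i)"
      unfolding Ac_def sov_Acoef_def prod_1N_minus Xf
      by (simp add: prod_dividef L_def)
    have F_eq: "(\<Prod>c\<in>?R. F' c (h (Suc c)) / (X h i / X h c - X h c / X h i)) =
       (\<Prod>c\<in>?R. Q (X h c)) * (\<Prod>c\<in>?R. Qbar (X h c)) / ((\<Prod>c\<in>?R. omega (Suc c) (X h c)) * (\<Prod>c\<in>?R. X h i / X h c - X h c / X h i))"
      by (simp add: F'_def Xf prod_dividef prod.distrib)
    have G_eq: "G' i (h (Suc i)) = Q (X h i) * Qbar (q * X h i) * abar (X h i) / (omega (Suc i) (X h i) * k * L (q * X h i))"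
      by (simp add: G'_def Xf)
    have nz1: "L (q * X h i) \<noteq> 0" "(\<Prod>c\<in>?R. L (X h c)) \<noteq> 0" using bsh b_eq by auto
    have nz2: "omega (Suc i) (X h i) \<noteq> 0" "(\<Prod>c\<in>?R. omega (Suc c) (X h c)) \<noteq> 0"
      using omega_nz i by (auto simp: X_def)
    have nz3: "(\<Prod>c\<in>?R. X h i / X h c - X h c / X h i) \<noteq> 0"
    proof -
      have "X h i / X h c - X h c / X h i \<noteq> 0" if "c \<in> ?R" for c
      proof -
        have c: "c < N" "c \<noteq> i" using that by auto
        have "X h i / X h c - X h c / X h i = ((X h i)^2 - (X h c)^2) / (X h i * X h c)"
          using Xnz[OF c(1)] Xnz[OF i] by (simp add: field_simps power2_eq_square)
        then show ?thesis using Xsep[OF i c(1)] c Xnz[OF c(1)] Xnz[OF i] by auto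
      qed
      then show ?thesis by simp
    qed
    show "v h * Ac h (Suc i) * Pqb (sov_shift p (Suc i) h) / b (sov_shift p (Suc i) h) =
     G' i (h (Suc i)) * (\<Prod>c\<in>{0..<N}-{i}. F' c (h (Suc c)) / (X h i / X h c - X h c / X h i)) * vprod N (\<lambda>c. (X h c)^2)"
      unfolding v_eq Ac_eq Pqb_eq b_eq F_eq G_eq
      by (rule alg[OF k_nz nz1 nz2 nz3])
  qed
  obtain n where Nn: "N = Suc n" using N_pos by (cases N) auto
  define m where "m = (\<lambda>i t j. if j < n then (sov_eta q eta0 (Suc i) t)^(2*j+1) * F' i t else (sov_eta q eta0 (Suc i) t)^n * G' i t)"
  have step4: "\<And>h. h \<in> S \<Longrightarrow> (\<Sum>a=1..N. v h * Ac h a * Pqb (sov_shift p a h) / b (sov_shift p a h)) =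
      det (mat N N (\<lambda>(i,j). m i (h (Suc i)) j))"
  proof -
    fix h assume h: "h \<in> S"
    have "(\<Sum>a=1..N. v h * Ac h a * Pqb (sov_shift p a h) / b (sov_shift p a h)) =
       (\<Sum>i<N. G' i (h (Suc i)) * (\<Prod>c\<in>{0..<N}-{i}. F' c (h (Suc c)) / (X h i / X h c - X h c / X h i)) * vprod N (\<lambda>c. (X h c)^2))"
      unfolding sum_1N using step3[OF h] by (intro sum.cong refl) auto
    also have "\<dots> = det (mat (Suc n) (Suc n) (\<lambda>(i,j). if j < n then X h i ^ (2*j+1) * F' i (h (Suc i)) else X h i ^ n * G' i (h (Suc i))))"
      unfolding Nn
      by (rule detM[symmetric]) (use Xnz Xsep Nn in auto)
    also have "(\<lambda>(i,j). if j < n then X h i ^ (2*j+1) * F' i (h (Suc i)) else X h i ^ n * G' i (h (Suc i))) = (\<lambda>(i,j). m i (h (Suc i)) j)"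
      unfolding m_def X_def by simp
    finally show "(\<Sum>a=1..N. v h * Ac h a * Pqb (sov_shift p a h) / b (sov_shift p a h)) = det (mat N N (\<lambda>(i,j). m i (h (Suc i)) j))"
      unfolding Nn .
  qed
  have entries: "\<And>i j. i < N \<Longrightarrow> j < N \<Longrightarrow> (\<Sum>t<p. m i t j) = sov_Umat p q eta0 k abar omega N Qbar Q lam (i+1) (j+1)"
  proof -
    fix i j assume i: "i < N" and j: "j < N"
    let ?E = "\<lambda>t. sov_eta q eta0 (Suc i) t"
    let ?e = "eta0 (Suc i)"
    have Ep: "?E p = ?E 0" and Ep1: "?E (Suc p) = ?E 1" using q_p by (simp_all add: sov_eta_def)
    have ES: "\<And>t. ?E (t + 1) = q * ?E t" by (simp add: sov_eta_def)
    have Epow: "\<And>t r. (?E t)^r = ?e ^ r * q ^ (r * t)" by (simp add: sov_eta_def power_mult_distrib power_mult mult.commute)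
    have qp: "\<And>r. q ^ (r * p) = 1" by (simp add: power_mult_distrib mult.commute[of _ p] power_mult q_p)
    show "(\<Sum>t<p. m i t j) = sov_Umat p q eta0 k abar omega N Qbar Q lam (i+1) (j+1)"
    proof (cases "j < n")
      case True
      define g where "g = (\<lambda>c. q ^ ((2 * j + 1) * c) * Q (?E c) * Qbar (?E c) / omega (Suc i) (?E c))"
      have "(\<Sum>t<p. m i t j) = (\<Sum>t<p. ?e ^ (2*j+1) * g t)"
        by (intro sum.cong refl) (simp only: m_def if_P[OF True] Epow F'_def g_def, simp add: divide_inverse inverse_mult_distrib mult_ac)
      also have "\<dots> = ?e ^ (2*j+1) * (\<Sum>c=1..p. g c)"
      proof -
        have "(\<Sum>t<p. g t) = (\<Sum>c=1..p. g c)" by (rule sum_shift_p) (simp only: g_def Ep qp, simp)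
        then show ?thesis by (simp only: sum_distrib_left[symmetric])
      qed
      also have "\<dots> = sov_Umat p q eta0 k abar omega N Qbar Q lam (i+1) (j+1)"
        using True by (simp add: sov_Umat_def Nn g_def)
      finally show ?thesis .
    next
      case False
      then have jn: "j = n" using j Nn by simp
      define g where "g = (\<lambda>c. q ^ (n * c) * Q (?E c) * Qbar (?E (c + 1)) * abar (?E c) /
           (omega (Suc i) (?E c) * (lam / ?E (c + 1) - ?E (c + 1) / lam)))"
      have "(\<Sum>t<p. m i t j) = (\<Sum>t<p. ?e ^ n / k * g t)"
        by (intro sum.cong refl) (simp only: m_def jn less_irrefl if_False Epow G'_def g_def L_def ES, simp add: divide_inverse inverse_mult_distrib mult_ac)
      also have "\<dots> = ?e ^ n / k * (\<Sum>c=1..p. g c)"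
      proof -
        have "(\<Sum>t<p. g t) = (\<Sum>c=1..p. g c)" by (rule sum_shift_p) (simp only: g_def Ep qp, simp add: Ep1)
        then show ?thesis by (simp only: sum_distrib_left[symmetric])
      qed
      also have "\<dots> = sov_Umat p q eta0 k abar omega N Qbar Q lam (i+1) (j+1)"
        using jn by (simp add: sov_Umat_def Nn g_def)
      finally show ?thesis .
    qed
  qed
  have "sov_pair p q eta0 omega N (sov_state q eta0 omega N Qbar)
         (sov_Binv k q eta0 N lam (sov_A p q eta0 abar N lam (sov_state q eta0 omega N Q)))
     = (\<Sum>h\<in>S. \<Sum>a=1..N. v h * Ac h a * Pqb (sov_shift p a h) / b (sov_shift p a h))"
    unfolding step1 step2[symmetric] by (simp add: S_def Pqb_def v_def)
  also have "\<dots> = (\<Sum>h\<in>S. det (mat N N (\<lambda>(i,j). m i (h (Suc i)) j)))"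
    by (intro sum.cong refl step4)
  also have "\<dots> = det (mat N N (\<lambda>(i,j). \<Sum>t<p. m i t j))"
    unfolding S_def by (rule sum_det)
  also have "\<dots> = sov_detU p q eta0 k abar omega N Qbar Q lam"
    unfolding sov_detU_def by (intro arg_cong[where f=det] eq_matI) (auto simp: entries)
  finally show ?thesis .
qed


theorem mainTheorem8:
  fixes p N :: nat
    and q k :: complex
    and eta0 :: "nat \<Rightarrow> complex"
    and abar :: "complex \<Rightarrow> complex"
    and omega :: "nat \<Rightarrow> complex \<Rightarrow> complex"
    and Qbar Q :: "complex \<Rightarrow> complex"
  assumes p_odd: "odd p" and p_ge: "p \<ge> 3"
    and q_p: "q ^ p = 1"
    and q2_prim: "\<forall>j. 0 < j \<and> j < p \<longrightarrow> (q^2) ^ j \<noteq> 1"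
    and N_odd: "odd N"
    and eta0_nz: "\<forall>a\<in>{1..N}. eta0 a \<noteq> 0"
    and eta_sep: "\<forall>a\<in>{1..N}. \<forall>b\<in>{1..N}. \<forall>h h'. a \<noteq> b \<longrightarrow>
                    (sov_eta q eta0 a h)^2 \<noteq> (sov_eta q eta0 b h')^2"
    and k_nz: "k \<noteq> 0"
    and omega_nz: "\<forall>a\<in>{1..N}. \<forall>h. omega a (sov_eta q eta0 a h) \<noteq> 0"
  shows
    "(\<forall>lam. lam \<noteq> 0 \<and> sov_B_invertible p k q eta0 N lam \<and>
            (\<forall>a\<in>{1..N}. \<forall>h. lam \<noteq> sov_eta q eta0 a h \<and> lam \<noteq> - sov_eta q eta0 a h) \<longrightarrow>
       sov_pair p q eta0 omega N (sov_state q eta0 omega N Qbar)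
         (sov_Binv k q eta0 N lam (sov_A p q eta0 abar N lam (sov_state q eta0 omega N Q)))
       = sov_detU p q eta0 k abar omega N Qbar Q lam)
   \<and>
    (\<forall>(kappa :: nat \<Rightarrow> complex) (xi :: nat \<Rightarrow> complex) (qh :: complex) (n :: nat)
        (U :: (nat \<Rightarrow> nat) \<Rightarrow> (nat \<Rightarrow> nat) \<Rightarrow> complex)
        (Uinv :: (nat \<Rightarrow> nat) \<Rightarrow> (nat \<Rightarrow> nat) \<Rightarrow> complex)
        (phi_t :: complex) (phi_t' :: complex) (mu :: complex).
       n \<in> {1..N} \<and> qh^2 = q \<and> k = (\<Prod>m=1..N. kappa m / \<i>) \<and>
       mu = \<i> * kappa n * qh * xi n \<and>
       sov_B_invertible p k q eta0 N mu \<and>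
       (\<forall>h\<in>sov_idx p N. \<forall>h'\<in>sov_idx p N.
          (\<Sum>g\<in>sov_idx p N. U h g * Uinv g h') = (if h = h' then 1 else 0) \<and>
          (\<Sum>g\<in>sov_idx p N. Uinv h g * U g h') = (if h = h' then 1 else 0)) \<and>
       (\<forall>v. sov_pair p q eta0 omega N (sov_state q eta0 omega N Qbar) (sov_apply p N U v)
             = phi_t * sov_pair p q eta0 omega N (sov_state q eta0 omega N Qbar) v) \<and>
       (\<forall>h\<in>sov_idx p N. sov_apply p N U (sov_state q eta0 omega N Q) h
             = phi_t' * sov_state q eta0 omega N Q h) \<and>
       phi_t' \<noteq> 0
     \<longrightarrow>
       sov_pair p q eta0 omega N (sov_state q eta0 omega N Qbar)
         (sov_apply p N U (sov_Binv k q eta0 N mu (sov_A p q eta0 abar N mu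
            (sov_apply p N Uinv (sov_state q eta0 omega N Q)))))
       = phi_t / phi_t' * sov_detU p q eta0 k abar omega N Qbar Q mu)"
  proof -
  have p_pos: "p > 0" using p_ge by simp
  have N_pos: "N > 0" using N_odd by (cases N) auto
  have P1: "\<And>lam. sov_B_invertible p k q eta0 N lam \<Longrightarrow>
       sov_pair p q eta0 omega N (sov_state q eta0 omega N Qbar)
         (sov_Binv k q eta0 N lam (sov_A p q eta0 abar N lam (sov_state q eta0 omega N Q)))
       = sov_detU p q eta0 k abar omega N Qbar Q lam"
    by (rule part1[OF p_pos q_p N_pos eta0_nz eta_sep k_nz omega_nz])
  have A_cong: "\<And>lam w w'. (\<forall>h\<in>sov_idx p N. w h = w' h) \<Longrightarrow> sov_A p q eta0 abar N lam w = sov_A p q eta0 abar N lam w'"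
    unfolding sov_A_def by (intro ext sum.cong refl) auto
  have A_scale: "\<And>lam c w. sov_A p q eta0 abar N lam (\<lambda>h. c * w h) = (\<lambda>h'. c * sov_A p q eta0 abar N lam w h')"
    unfolding sov_A_def by (simp add: sum_distrib_left mult.assoc)
  have Binv_scale: "\<And>lam c f. sov_Binv k q eta0 N lam (\<lambda>h. c * f h) = (\<lambda>h. c * sov_Binv k q eta0 N lam f h)"
    unfolding sov_Binv_def by auto
  have pair_scale: "\<And>l c f. sov_pair p q eta0 omega N l (\<lambda>h. c * f h) = c * sov_pair p q eta0 omega N l f"
    unfolding sov_pair_def by (simp add: sum_distrib_left mult_ac)
  show ?thesis
  proof (intro conjI allI impI)
    fix lam assume "lam \<noteq> 0 \<and> sov_B_invertible p k q eta0 N lam \<and>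
            (\<forall>a\<in>{1..N}. \<forall>h. lam \<noteq> sov_eta q eta0 a h \<and> lam \<noteq> - sov_eta q eta0 a h)"
    then show "sov_pair p q eta0 omega N (sov_state q eta0 omega N Qbar)
         (sov_Binv k q eta0 N lam (sov_A p q eta0 abar N lam (sov_state q eta0 omega N Q)))
       = sov_detU p q eta0 k abar omega N Qbar Q lam" using P1 by blast
  next
    fix kappa xi :: "nat \<Rightarrow> complex" and qh :: complex and n :: nat
      and U Uinv :: "(nat \<Rightarrow> nat) \<Rightarrow> (nat \<Rightarrow> nat) \<Rightarrow> complex" and phi_t phi_t' mu :: complex
    assume H: "n \<in> {1..N} \<and> qh^2 = q \<and> k = (\<Prod>m=1..N. kappa m / \<i>) \<and>
       mu = \<i> * kappa n * qh * xi n \<and>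
       sov_B_invertible p k q eta0 N mu \<and>
       (\<forall>h\<in>sov_idx p N. \<forall>h'\<in>sov_idx p N.
          (\<Sum>g\<in>sov_idx p N. U h g * Uinv g h') = (if h = h' then 1 else 0) \<and>
          (\<Sum>g\<in>sov_idx p N. Uinv h g * U g h') = (if h = h' then 1 else 0)) \<and>
       (\<forall>v. sov_pair p q eta0 omega N (sov_state q eta0 omega N Qbar) (sov_apply p N U v)
             = phi_t * sov_pair p q eta0 omega N (sov_state q eta0 omega N Qbar) v) \<and>
       (\<forall>h\<in>sov_idx p N. sov_apply p N U (sov_state q eta0 omega N Q) h
             = phi_t' * sov_state q eta0 omega N Q h) \<and>
       phi_t' \<noteq> 0"
    define S where "S = sov_idx p N"
    define sQ where "sQ = sov_state q eta0 omega N Q"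
    have Bmu: "sov_B_invertible p k q eta0 N mu" using H by blast
    have inv: "\<And>h h'. h \<in> S \<Longrightarrow> h' \<in> S \<Longrightarrow> (\<Sum>g\<in>S. Uinv h g * U g h') = (if h = h' then 1 else 0)"
      using H unfolding S_def by blast
    have eig: "\<And>h. h \<in> S \<Longrightarrow> (\<Sum>g\<in>S. U h g * sQ g) = phi_t' * sQ h"
      using H unfolding S_def sQ_def sov_apply_def by blast
    have phinz: "phi_t' \<noteq> 0" using H by blast
    have Ueig: "\<And>v. sov_pair p q eta0 omega N (sov_state q eta0 omega N Qbar) (sov_apply p N U v)
             = phi_t * sov_pair p q eta0 omega N (sov_state q eta0 omega N Qbar) v" using H by blast
    have Uinv_s: "\<forall>h\<in>sov_idx p N. sov_apply p N Uinv sQ h = inverse phi_t' * sQ h"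
    proof
      fix h assume h: "h \<in> sov_idx p N"
      have "sov_apply p N Uinv sQ h = (\<Sum>g\<in>S. Uinv h g * (inverse phi_t' * (\<Sum>g'\<in>S. U g g' * sQ g')))"
        unfolding sov_apply_def S_def[symmetric]
        by (intro sum.cong refl) (simp add: eig phinz)
      also have "\<dots> = inverse phi_t' * (\<Sum>g'\<in>S. (\<Sum>g\<in>S. Uinv h g * U g g') * sQ g')"
        by (simp add: sum_distrib_left sum_distrib_right mult_ac) (rule sum.swap)
      also have "\<dots> = inverse phi_t' * (\<Sum>g'\<in>S. (if h = g' then sQ g' else 0))"
      proof (intro arg_cong[where f="(*) _"] sum.cong refl)
        fix g' assume g': "g' \<in> S"
        have hS: "h \<in> S" using h by (simp add: S_def)
        show "(\<Sum>g\<in>S. Uinv h g * U g g') * sQ g' = (if h = g' then sQ g' else 0)"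
          using inv[OF hS g'] by simp
      qed
      also have "\<dots> = inverse phi_t' * sQ h"
        using h by (simp add: S_def finite_idx)
      finally show "sov_apply p N Uinv sQ h = inverse phi_t' * sQ h" .
    qed
    have "sov_pair p q eta0 omega N (sov_state q eta0 omega N Qbar)
         (sov_apply p N U (sov_Binv k q eta0 N mu (sov_A p q eta0 abar N mu
            (sov_apply p N Uinv (sov_state q eta0 omega N Q)))))
      = phi_t * sov_pair p q eta0 omega N (sov_state q eta0 omega N Qbar)
          (sov_Binv k q eta0 N mu (sov_A p q eta0 abar N mu (sov_apply p N Uinv sQ)))"
      unfolding sQ_def by (rule Ueig)
    also have "sov_A p q eta0 abar N mu (sov_apply p N Uinv sQ) = sov_A p q eta0 abar N mu (\<lambda>h. inverse phi_t' * sQ h)"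
      by (rule A_cong) (use Uinv_s in simp)
    also have "\<dots> = (\<lambda>h'. inverse phi_t' * sov_A p q eta0 abar N mu sQ h')" by (rule A_scale)
    also have "sov_Binv k q eta0 N mu \<dots> = (\<lambda>h. inverse phi_t' * sov_Binv k q eta0 N mu (sov_A p q eta0 abar N mu sQ) h)"
      by (rule Binv_scale)
    also have "sov_pair p q eta0 omega N (sov_state q eta0 omega N Qbar) \<dots> =
       inverse phi_t' * sov_pair p q eta0 omega N (sov_state q eta0 omega N Qbar) (sov_Binv k q eta0 N mu (sov_A p q eta0 abar N mu sQ))"
      by (rule pair_scale)
    also have "sov_pair p q eta0 omega N (sov_state q eta0 omega N Qbar) (sov_Binv k q eta0 N mu (sov_A p q eta0 abar N mu sQ))
       = sov_detU p q eta0 k abar omega N Qbar Q mu"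
      unfolding sQ_def by (rule P1[OF Bmu])
    finally show "sov_pair p q eta0 omega N (sov_state q eta0 omega N Qbar)
         (sov_apply p N U (sov_Binv k q eta0 N mu (sov_A p q eta0 abar N mu
            (sov_apply p N Uinv (sov_state q eta0 omega N Q)))))
       = phi_t / phi_t' * sov_detU p q eta0 k abar omega N Qbar Q mu"
      by (simp add: divide_inverse mult_ac)
  qed
qed

end
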